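(* Let $G$ be a connected graph and $I\subseteq V(G)$ a pre-cycle core of $G$. Then for any $y,z\in I$, every non-backtracking path in $G$ between $y$ and $z$ is contained in the induced subgraph $G|_I$.
   Context: Graphs are simple and unoriented, possibly infinite. A cycle in $G$ is a closed path $(x_0,\dots,x_n=x_0)$ with no repeated vertices except $x_0=x_n$ and no edges $(x_i,x_j)$ of $G$ with $i-j\not\equiv0,\pm1\pmod n$. A pre-cycle core of $G$ is a subset $I\subseteq V(G)$ such that $G|_I$ is connected and contains all cycles of $G$. A path is non-backtracking if it never traverses an edge and immediately returns along it. *)

theory Defs
  imports Main
begin

definition simple_graph :: "'a set \<Rightarrow> ('a \<Rightarrow> 'a \<Rightarrow> bool) \<Rightarrow> bool" where
  "simple_graph V E \<longleftrightarrow>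
     (\<forall>x y. E x y \<longrightarrow> x \<in> V \<and> y \<in> V) \<and>
     (\<forall>x y. E x y \<longrightarrow> E y x) \<and> (\<forall>x. \<not> E x x)"

definition is_path :: "'a set \<Rightarrow> ('a \<Rightarrow> 'a \<Rightarrow> bool) \<Rightarrow> 'a list \<Rightarrow> bool" where
  "is_path V E xs \<longleftrightarrow> xs \<noteq> [] \<and> set xs \<subseteq> V \<and>
     (\<forall>i. Suc i < length xs \<longrightarrow> E (xs ! i) (xs ! Suc i))"

definition non_backtracking :: "'a list \<Rightarrow> bool" where
  "non_backtracking xs \<longleftrightarrow> (\<forall>i. i + 2 < length xs \<longrightarrow> xs ! (i + 2) \<noteq> xs ! i)"

definition connected_on :: "('a \<Rightarrow> 'a \<Rightarrow> bool) \<Rightarrow> 'a set \<Rightarrow> bool" where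
  "connected_on E S \<longleftrightarrow> S \<noteq> {} \<and>
     (\<forall>x\<in>S. \<forall>y\<in>S. \<exists>xs. is_path S E xs \<and> hd xs = x \<and> last xs = y)"

text \<open>A cycle (x_0,...,x_{n-1},x_n=x_0), given by the list [x_0,...,x_{n-1}], n \<ge> 3,
  distinct vertices, cyclically consecutive vertices adjacent, and no chords.\<close>
definition is_cycle :: "'a set \<Rightarrow> ('a \<Rightarrow> 'a \<Rightarrow> bool) \<Rightarrow> 'a list \<Rightarrow> bool" where
  "is_cycle V E cs \<longleftrightarrow> 3 \<le> length cs \<and> distinct cs \<and> set cs \<subseteq> V \<and>
     (\<forall>i < length cs. E (cs ! i) (cs ! ((i + 1) mod length cs))) \<and>
     (\<forall>i < length cs. \<forall>j < length cs. E (cs ! i) (cs ! j) \<longrightarrow>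
        j = (i + 1) mod length cs \<or> i = (j + 1) mod length cs)"

definition pre_cycle_core :: "'a set \<Rightarrow> ('a \<Rightarrow> 'a \<Rightarrow> bool) \<Rightarrow> 'a set \<Rightarrow> bool" where
  "pre_cycle_core V E I \<longleftrightarrow> I \<subseteq> V \<and> connected_on E I \<and>
     (\<forall>cs. is_cycle V E cs \<longrightarrow> set cs \<subseteq> I)"

end

theory Submission
  imports Defs
begin

definition loop :: "('a \<Rightarrow> 'a \<Rightarrow> bool) \<Rightarrow> 'a list \<Rightarrow> bool" where
  "loop E cs \<longleftrightarrow> 3 \<le> length cs \<and> distinct cs \<and> successively E cs \<and> E (last cs) (hd cs)"

lemma nb_infix:
  assumes "non_backtracking (p @ s @ r)" shows "non_backtracking s"
  unfolding non_backtracking_def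
proof (intro allI impI)
  fix i assume i: "i + 2 < length s"
  have e: "\<And>k. k < length s \<Longrightarrow> (p @ s @ r) ! (length p + k) = s ! k"
    by (simp add: nth_append)
  have all: "\<forall>k. k + 2 < length (p @ s @ r) \<longrightarrow> (p @ s @ r) ! (k + 2) \<noteq> (p @ s @ r) ! k"
    using assms unfolding non_backtracking_def .
  have "length p + i + 2 < length (p @ s @ r)" using i by simp
  then have "(p @ s @ r) ! (length p + i + 2) \<noteq> (p @ s @ r) ! (length p + i)"
    using all by blast
  moreover have "(p @ s @ r) ! (length p + i + 2) = s ! (i + 2)"
    using e[of "i+2"] i by (simp add: add.assoc)
  moreover have "(p @ s @ r) ! (length p + i) = s ! i"
    using e[of i] i by simp
  ultimately show "s ! (i + 2) \<noteq> s ! i" by simp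
qed

lemma succ_infix:
  assumes "successively E (p @ s @ r)" shows "successively E s"
  using assms by (simp add: successively_append_iff)

lemma loop_rotate:
  assumes "loop E (p @ v # s)" shows "loop E (v # s @ p)"
proof -
  have d: "distinct (v # s @ p)" using assms unfolding loop_def by auto
  have l: "length (v # s @ p) = length (p @ v # s)" by simp
  have s1: "successively E p" and s2: "successively E (v # s)"
    and j: "p = [] \<or> E (last p) v"
    using assms unfolding loop_def by (auto simp: successively_append_iff)
  have c: "E (last (p @ v # s)) (hd (p @ v # s))" using assms unfolding loop_def by auto
  show ?thesis
  proof (cases "p = []")
    case True
    then show ?thesis using assms by simp
  next
    case False
    have "successively E ((v # s) @ p)"
      using s1 s2 c False by (subst successively_append_iff) simp
    then have "successively E (v # s @ p)" by simp
    moreover have "E (last (v # s @ p)) (hd (v # s @ p))" using j False by simp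
    ultimately show ?thesis using d l assms unfolding loop_def by auto
  qed
qed

lemma loop_to_cycle:
  assumes g: "simple_graph V E"
  shows "loop E cs \<Longrightarrow> set cs \<subseteq> V \<Longrightarrow> \<exists>c. is_cycle V E c \<and> hd c = hd cs"
proof (induction "length cs" arbitrary: cs rule: less_induct)
  case less
  have sym: "\<And>x y. E x y \<Longrightarrow> E y x" and irr: "\<And>x. \<not> E x x"
    using g unfolding simple_graph_def by auto
  define n where "n = length cs"
  have n3: "3 \<le> n" and dist: "distinct cs" and suc: "successively E cs"
    and cl: "E (last cs) (hd cs)" using less.prems unfolding loop_def n_def by auto
  have adj: "\<forall>i < n. E (cs ! i) (cs ! ((i + 1) mod n))"
  proof (intro allI impI)
    fix i assume i: "i < n"
    show "E (cs ! i) (cs ! ((i + 1) mod n))"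
    proof (cases "i + 1 < n")
      case True
      then show ?thesis using suc successively_nth[of E cs i] n_def by simp
    next
      case False
      then have "i = n - 1" "Suc i = n" using i by auto
      then have "i = n - 1" "(i+1) mod n = 0" by auto
      moreover have "cs \<noteq> []" using n3 n_def by auto
      ultimately show ?thesis using cl n_def by (simp add: last_conv_nth hd_conv_nth)
    qed
  qed
  show ?case
  proof (cases "\<forall>i < n. \<forall>j < n. E (cs ! i) (cs ! j) \<longrightarrow>
        j = (i + 1) mod n \<or> i = (j + 1) mod n")
    case True
    then have "is_cycle V E cs" using adj n3 dist less.prems(2) unfolding is_cycle_def n_def by auto
    then show ?thesis by blast
  next
    case False
    then obtain i0 j0 where ij0: "i0 < n" "j0 < n" "E (cs ! i0) (cs ! j0)"
      "j0 \<noteq> (i0 + 1) mod n" "i0 \<noteq> (j0 + 1) mod n" by blast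
    have "\<exists>i j. i < j \<and> j < n \<and> E (cs ! i) (cs ! j) \<and> j \<noteq> i + 1 \<and> \<not> (i = 0 \<and> j = n - 1)"
    proof -
      have "i0 \<noteq> j0" using ij0(3) irr by auto
      have key: "\<And>i j. i < j \<Longrightarrow> j < n \<Longrightarrow> j \<noteq> (i + 1) mod n \<Longrightarrow> i \<noteq> (j + 1) mod n
         \<Longrightarrow> j \<noteq> i + 1 \<and> \<not> (i = 0 \<and> j = n - 1)"
      proof -
        fix i j assume a: "i < j" "j < n" "j \<noteq> (i + 1) mod n" "i \<noteq> (j + 1) mod n"
        have "(i+1) mod n = i + 1" using a by auto
        moreover have "j = n - 1 \<Longrightarrow> (j+1) mod n = 0" using a by auto
        ultimately show "j \<noteq> i + 1 \<and> \<not> (i = 0 \<and> j = n - 1)" using a by auto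
      qed
      show ?thesis
      proof (cases "i0 < j0")
        case True
        then show ?thesis using key[of i0 j0] ij0 by blast
      next
        case False
        then have "j0 < i0" using \<open>i0 \<noteq> j0\<close> by auto
        then show ?thesis using key[of j0 i0] ij0 sym by blast
      qed
    qed
    then obtain i j where ij: "i < j" "j < n" "E (cs ! i) (cs ! j)" "j \<noteq> i + 1"
      "\<not> (i = 0 \<and> j = n - 1)" by blast
    define cs' where "cs' = take (Suc i) cs @ drop j cs"
    have len: "length cs' = Suc i + (n - j)" using ij unfolding cs'_def n_def by simp
    have lt: "length cs' < length cs" using len ij n_def by simp
    have ge3: "3 \<le> length cs'" using len ij by auto
    have dist': "distinct cs'"
    proof -
      have "set (take (Suc i) cs) \<inter> set (drop j cs) = {}"
        using set_take_disj_set_drop_if_distinct[OF dist, of "Suc i" j] ij by auto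
      then show ?thesis unfolding cs'_def using dist by simp
    qed
    have st: "successively E (take (Suc i) cs)"
      using suc append_take_drop_id[of "Suc i" cs] successively_append_iff
      by metis
    have sd: "successively E (drop j cs)"
      using suc append_take_drop_id[of j cs] successively_append_iff
      by metis
    have lt1: "last (take (Suc i) cs) = cs ! i" using ij n_def
      by (subst last_conv_nth) auto
    have hd1: "hd (drop j cs) = cs ! j" using ij n_def by (simp add: hd_drop_conv_nth)
    have ne: "drop j cs \<noteq> []" "take (Suc i) cs \<noteq> []" using ij n_def by auto
    have succ': "successively E cs'" unfolding cs'_def
      using st sd lt1 hd1 ij(3) by (simp add: successively_append_iff)
    have lastc: "last cs' = last cs" unfolding cs'_def using ne ij n_def by simp
    have hdc: "hd cs' = hd cs" unfolding cs'_def using ne by simp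
    have "loop E cs'" unfolding loop_def using ge3 dist' succ' lastc hdc cl by simp
    moreover have "set cs' \<subseteq> V" unfolding cs'_def using less.prems(2)
      using set_take_subset[of "Suc i" cs] set_drop_subset[of j cs] by auto
    ultimately obtain c where "is_cycle V E c" "hd c = hd cs'" using less.hyps[OF lt] by blast
    then show ?thesis using hdc by auto
  qed
qed

lemma closed_walk_loop:
  assumes g: "simple_graph V E"
  shows "c = x # q @ [x] \<Longrightarrow> successively E c \<Longrightarrow> non_backtracking c \<Longrightarrow>
    \<exists>L. loop E L \<and> set L \<subseteq> set c"
proof (induction "length c" arbitrary: c x q rule: less_induct)
  case less
  have irr: "\<And>x. \<not> E x x" using g unfolding simple_graph_def by auto
  show ?case
  proof (cases "distinct (x # q)")
    case True
    have "q \<noteq> []" using less.prems irr by auto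
    moreover have "\<And>y. q \<noteq> [y]"
    proof
      fix y assume "q = [y]"
      then have "c = [x, y, x]" using less.prems by simp
      moreover have "\<not> non_backtracking [x, y, x]"
        unfolding non_backtracking_def by (auto intro: exI[of _ 0])
      ultimately show False using less.prems(3) by simp
    qed
    ultimately have "2 \<le> length q"
      by (cases q; cases "tl q") auto
    moreover have sx: "successively E ((x # q) @ [x])" using less.prems(1,2) by simp
    then have "successively E (x # q)" "E (last (x # q)) x"
      unfolding successively_append_iff by auto
    ultimately have "loop E (x # q)" using True unfolding loop_def by simp
    then show ?thesis using less.prems(1) by auto
  next
    case False
    then obtain p y s r where d: "x # q = p @ [y] @ s @ [y] @ r"
      using not_distinct_decomp by blast
    have ceq: "c = p @ (y # s @ [y]) @ (r @ [x])" using d less.prems(1) by simp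
    have "length (y # s @ [y]) < length c"
    proof -
      have "length (x # q) = length p + length (y # s @ [y]) + length r" using d by simp
      then show ?thesis using less.prems(1) by simp
    qed
    moreover have "successively E (y # s @ [y])"
      using succ_infix less.prems(2) ceq by metis
    moreover have "non_backtracking (y # s @ [y])"
      using nb_infix less.prems(3) ceq by metis
    ultimately obtain L where "loop E L" "set L \<subseteq> set (y # s @ [y])"
      using less.hyps by blast
    moreover have "set (y # s @ [y]) \<subseteq> set c" using ceq by auto
    ultimately show ?thesis by blast
  qed
qed

lemma excursion:
  "hd xs \<in> I \<Longrightarrow> last xs \<in> I \<Longrightarrow> \<not> set xs \<subseteq> I \<Longrightarrow>
   \<exists>A a m b B. xs = A @ [a] @ m @ [b] @ B \<and> a \<in> I \<and> b \<in> I \<and> m \<noteq> [] \<and> set m \<inter> I = {}"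
proof (induction xs)
  case Nil
  then show ?case by simp
next
  case (Cons a ys)
  have aI: "a \<in> I" using Cons.prems by simp
  have ysne: "ys \<noteq> []" using Cons.prems by auto
  define m where "m = takeWhile (\<lambda>x. x \<notin> I) ys"
  define rest where "rest = dropWhile (\<lambda>x. x \<notin> I) ys"
  have ys: "ys = m @ rest" unfolding m_def rest_def by simp
  show ?case
  proof (cases "m = []")
    case True
    then have "hd ys \<in> I" using ysne unfolding m_def
      by (cases ys) (auto split: if_splits)
    moreover have "last ys \<in> I" using Cons.prems ysne by simp
    moreover have "\<not> set ys \<subseteq> I" using Cons.prems aI by auto
    ultimately obtain A a' m' b B where h: "ys = A @ [a'] @ m' @ [b] @ B" "a' \<in> I" "b \<in> I"
      "m' \<noteq> []" "set m' \<inter> I = {}" using Cons.IH by blast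
    show ?thesis
      by (rule exI[of _ "a # A"], rule exI[of _ a'], rule exI[of _ m'], rule exI[of _ b],
          rule exI[of _ B]) (simp add: h)
  next
    case False
    have mI: "set m \<inter> I = {}" unfolding m_def by (auto dest: set_takeWhileD)
    have "rest \<noteq> []"
    proof
      assume "rest = []"
      then have "last ys \<in> set m" using ys ysne by simp
      moreover have "last ys \<in> I" using Cons.prems ysne by simp
      ultimately show False using mI by auto
    qed
    then obtain b B where rb: "rest = b # B" by (cases rest) auto
    have bI: "b \<in> I" using rb hd_dropWhile[of "\<lambda>x. x \<notin> I" ys] unfolding rest_def
      by auto
    show ?thesis
      by (rule exI[of _ "[]"], rule exI[of _ a], rule exI[of _ m], rule exI[of _ b],
          rule exI[of _ B]) (simp add: rb ys aI False mI bI)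
  qed
qed

lemma distinct_walk:
  "successively E p \<Longrightarrow> p \<noteq> [] \<Longrightarrow> \<exists>p'. distinct p' \<and> successively E p' \<and> set p' \<subseteq> set p
     \<and> hd p' = hd p \<and> last p' = last p \<and> p' \<noteq> []"
proof (induction "length p" arbitrary: p rule: less_induct)
  case less
  show ?case
  proof (cases "distinct p")
    case True
    then show ?thesis using less.prems by blast
  next
    case False
    then obtain A y B C where d: "p = A @ [y] @ B @ [y] @ C"
      using not_distinct_decomp by blast
    define q where "q = A @ [y] @ C"
    have "length q < length p" using d q_def by simp
    moreover have "successively E q"
    proof -
      have "p = (A @ [y]) @ B @ (y # C)" using d by simp
      then have "successively E (A @ [y])" "successively E (y # C)"
        using less.prems(1) by (metis successively_append_iff)+
      then have "successively E ((A @ [y]) @ C)"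
        by (subst successively_append_iff) (auto simp: successively_Cons)
      then show ?thesis unfolding q_def by simp
    qed
    moreover have "q \<noteq> []" unfolding q_def by simp
    ultimately obtain p' where p': "distinct p'" "successively E p'" "set p' \<subseteq> set q"
      "hd p' = hd q" "last p' = last q" "p' \<noteq> []" using less.hyps by blast
    have "set q \<subseteq> set p" unfolding q_def d by auto
    moreover have "hd q = hd p" unfolding q_def d by (cases A) auto
    moreover have "last q = last p" unfolding q_def d by (cases C) auto
    ultimately show ?thesis using p' by auto
  qed
qed

theorem corollary2p3:
  fixes V :: "'a set" and E :: "'a \<Rightarrow> 'a \<Rightarrow> bool" and I :: "'a set"
  assumes "simple_graph V E"
    and "connected_on E V"
    and "pre_cycle_core V E I"
    and "y \<in> I" and "z \<in> I"
    and "is_path V E xs" and "non_backtracking xs"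
    and "hd xs = y" and "last xs = z"
  shows "is_path I E xs"
proof -
  have sym: "\<And>x y. E x y \<Longrightarrow> E y x" using assms(1) unfolding simple_graph_def by auto
  have xne: "xs \<noteq> []" and xV: "set xs \<subseteq> V" and xsuc: "successively E xs"
    using assms(6) unfolding is_path_def successively_conv_nth by auto
  have IV: "I \<subseteq> V" and Icon: "connected_on E I" and Icyc: "\<forall>cs. is_cycle V E cs \<longrightarrow> set cs \<subseteq> I"
    using assms(3) unfolding pre_cycle_core_def by auto
  have "set xs \<subseteq> I"
  proof (rule ccontr)
    assume nI: "\<not> set xs \<subseteq> I"
    obtain A a m b B where dec: "xs = A @ [a] @ m @ [b] @ B" "a \<in> I" "b \<in> I" "m \<noteq> []"
      "set m \<inter> I = {}" using excursion[of xs I] nI assms(4,5,8,9) by blast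
    define w where "w = a # m @ [b]"
    have xw: "xs = A @ w @ B" using dec unfolding w_def by simp
    have ws: "successively E w" using succ_infix xsuc xw by metis
    have wn: "non_backtracking w" using nb_infix assms(7) xw by metis
    have wV: "set w \<subseteq> V" using xV xw by auto
    have "\<exists>L. loop E L \<and> set L \<subseteq> V \<and> set L \<inter> set m \<noteq> {}"
    proof (cases "distinct m")
      case False
      then obtain p u s r where d: "m = p @ [u] @ s @ [u] @ r"
        using not_distinct_decomp by blast
      have weq: "w = (a # p) @ (u # s @ [u]) @ (r @ [b])" unfolding w_def d by simp
      have "successively E (u # s @ [u])" using succ_infix ws weq by metis
      moreover have "non_backtracking (u # s @ [u])" using nb_infix wn weq by metis
      ultimately obtain L where L: "loop E L" "set L \<subseteq> set (u # s @ [u])"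
        using closed_walk_loop[OF assms(1), of "u # s @ [u]" u s] by blast
      have "set (u # s @ [u]) \<subseteq> set m" unfolding d by auto
      moreover have "set m \<subseteq> V" using wV unfolding w_def by auto
      moreover have "L \<noteq> []" using L(1) unfolding loop_def by auto
      moreover have "hd L \<in> set L" using \<open>L \<noteq> []\<close> by simp
      ultimately have "hd L \<in> set L" "hd L \<in> set m" "set L \<subseteq> V" using L by blast+
      then show ?thesis using L(1) by blast
    next
      case dm: True
      show ?thesis
      proof (cases "a = b")
        case True
        have anm: "a \<notin> set m" using dec by auto
        have "\<And>u. m \<noteq> [u]"
        proof
          fix u assume "m = [u]"
          then have "w = [a, u, a]" using True unfolding w_def by simp
          moreover have "\<not> non_backtracking [a, u, a]"
            unfolding non_backtracking_def by (auto intro: exI[of _ 0])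
          ultimately show False using wn by simp
        qed
        then have "2 \<le> length m" using dec(4)
          by (cases m; cases "tl m") auto
        moreover have sx: "successively E ((a # m) @ [a])" using ws True unfolding w_def by simp
        then have "successively E (a # m)" "E (last (a # m)) a"
          unfolding successively_append_iff by auto
        ultimately have "loop E (a # m)" using dm anm unfolding loop_def by simp
        moreover have "set (a # m) \<subseteq> V" using wV unfolding w_def by auto
        moreover have "set (a # m) \<inter> set m \<noteq> {}" using dec(4) by (cases m) auto
        ultimately show ?thesis by blast
      next
        case False
        obtain p where p: "is_path I E p" "hd p = a" "last p = b"
          using Icon dec(2,3) unfolding connected_on_def by blast
        have ps: "successively E p" "p \<noteq> []" "set p \<subseteq> I"
          using p(1) unfolding is_path_def successively_conv_nth by auto
        obtain p' where p': "distinct p'" "successively E p'" "set p' \<subseteq> set p"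
          "hd p' = a" "last p' = b" "p' \<noteq> []" using distinct_walk[OF ps(1,2)] p by auto
        have len2: "2 \<le> length p'"
        proof (rule ccontr)
          assume "\<not> 2 \<le> length p'"
          then obtain u where "p' = [u]" using p'(6)
            by (cases p'; cases "tl p'") auto
          then show False using p' False by simp
        qed
        define L where "L = m @ rev p'"
        have pI: "set p' \<subseteq> I" using p'(3) ps(3) by auto
        have dL: "distinct L" unfolding L_def using dm p'(1) pI dec(5) by auto
        have lenL: "3 \<le> length L" unfolding L_def using len2 dec(4)
          by (cases m) auto
        have srev: "successively E (rev p')"
          using p'(2) by (simp add: successively_mono sym)
        have wm: "successively E m" "E (last m) b" "E a (hd m)"
          using ws dec(4) unfolding w_def by (auto simp: successively_append_iff successively_Cons)
        have "hd (rev p') = b" using p' by (simp add: hd_rev)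
        then have sL: "successively E L" unfolding L_def using wm srev p'(6) dec(4)
          by (simp add: successively_append_iff)
        have "last (rev p') = a" using p' by (simp add: last_rev)
        then have cL: "E (last L) (hd L)" unfolding L_def using wm p'(6) dec(4) by simp
        have "loop E L" using dL lenL sL cL unfolding loop_def by simp
        moreover have "set L \<subseteq> V" unfolding L_def using wV pI IV unfolding w_def by auto
        moreover have "set L \<inter> set m \<noteq> {}" unfolding L_def using dec(4) by auto
        ultimately show ?thesis by blast
      qed
    qed
    then obtain L v where L: "loop E L" "set L \<subseteq> V" "v \<in> set L" "v \<in> set m" by blast
    obtain p s where Ls: "L = p @ v # s" using L(3) by (meson split_list)
    have "loop E (v # s @ p)" using loop_rotate L(1) Ls by metis
    moreover have "set (v # s @ p) \<subseteq> V" using L(2) Ls by auto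
    ultimately obtain c where "is_cycle V E c" "hd c = v"
      using loop_to_cycle[OF assms(1)] by fastforce
    moreover have "c \<noteq> []" using \<open>is_cycle V E c\<close> unfolding is_cycle_def by auto
    ultimately have "v \<in> I" using Icyc by (metis hd_in_set subsetD)
    then show False using L(4) dec(5) by auto
  qed
  then show ?thesis using assms(6) unfolding is_path_def by auto
qed

end
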